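(* Let $X_1,X_0$ be real random variables with densities $f_1,f_0$, and let $p_1,p_0>0$. For $b>0$ and $s\in\mathbb{R}$ define \[ \mathcal{O}_b(s)=p_1\log\mathbb{E}\Big[\Big(\tfrac{e^{sX_1}}{e^{sX_1}+e^{-sX_1}}\Big)^{b}\Big]+p_0\log\mathbb{E}\Big[\Big(\tfrac{e^{-sX_0}}{e^{sX_0}+e^{-sX_0}}\Big)^{b}\Big]. \] Assume $f_1(x)\ge f_1(-x)$ and $f_0(x)\le f_0(-x)$ for all $x\ge 0$. Then for every $b\ge 1$ the function $s\mapsto\mathcal{O}_b(s)$ is nondecreasing on $[0,\infty)$; in particular $\sup_{s\ge0}\mathcal{O}_b(s)=\lim_{s\to\infty}\mathcal{O}_b(s)$, i.e.\ the weighted estimator $\hat s_w(b)=\operatorname{argmax}\mathcal{O}_b$ equals $\infty$.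
   Context: $\mathcal{O}_b$ is the large-sample limit of the DRFit objective (entropy-weighted loss with $\rho_k=1$, no ridge term, $b=1/\alpha$) for one-dimensional logistic regression $\mathbb{P}(y=1\mid x)=e^{sx}/(e^{sx}+e^{-sx})$ on labelled data, where $X_k$ is the covariate distribution given (possibly erroneous) label $k$ and $p_k$ the probability of label $k$. *)

theory Defs
  imports "HOL-Analysis.Analysis"
begin

definition is_density :: "(real \<Rightarrow> real) \<Rightarrow> bool" where
  "is_density f \<longleftrightarrow> f \<in> borel_measurable lborel \<and> (\<forall>x. 0 \<le> f x)
     \<and> integrable lborel f \<and> (\<integral>x. f x \<partial>lborel) = 1"

definition dexp :: "(real \<Rightarrow> real) \<Rightarrow> (real \<Rightarrow> real) \<Rightarrow> real" where
  "dexp f g = (\<integral>x. f x * g x \<partial>lborel)"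

definition Obj :: "real \<Rightarrow> real \<Rightarrow> (real \<Rightarrow> real) \<Rightarrow> real \<Rightarrow> (real \<Rightarrow> real) \<Rightarrow> real \<Rightarrow> real" where
  "Obj b p1 f1 p0 f0 s =
     p1 * ln (dexp f1 (\<lambda>x. (exp (s*x) / (exp (s*x) + exp (-(s*x)))) powr b))
   + p0 * ln (dexp f0 (\<lambda>x. (exp (-(s*x)) / (exp (s*x) + exp (-(s*x)))) powr b))"

end

theory Submission
  imports Defs
begin

definition sg :: "real \<Rightarrow> real" where
  "sg y = exp y / (exp y + exp (-y))"

lemma sg_alt: "sg y = 1 / (1 + exp (-2*y))"
proof -
  have "exp y / (exp y + exp (-y)) = 1 / (1 + exp (-y) / exp y)"
    by (simp add: field_simps add_pos_pos)
  also have "exp (-y) / exp y = exp (-2*y)" by (simp add: exp_diff[symmetric])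
  finally show ?thesis by (simp add: sg_def)
qed

lemma sg_den: "0 < exp (y::real) + exp (-y)" by (simp add: add_pos_pos)
lemma sg_pos: "0 < sg y" using sg_den[of y] by (simp add: sg_def)
lemma sg_less1: "sg y < 1" using sg_den[of y] by (simp add: sg_def)
lemma sg_neg: "sg (-y) = 1 - sg y"
  using sg_den[of y] unfolding sg_def by (simp add: field_simps)

lemma sg_mono: "y \<le> z \<Longrightarrow> sg y \<le> sg z"
  unfolding sg_alt by (auto intro!: divide_left_mono add_pos_pos mult_pos_pos)

lemma sg_half: "0 \<le> y \<Longrightarrow> 1/2 \<le> sg y"
  using sg_mono[of 0 y] by (simp add: sg_def)

lemma H_mono:
  fixes a c b u v :: real
  assumes "c \<le> a" "0 \<le> c" "1 \<le> b" "1/2 \<le> u" "u \<le> v" "v < 1"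
  shows "a * u powr b + c * (1-u) powr b \<le> a * v powr b + c * (1-v) powr b"
proof (rule DERIV_nonneg_imp_increasing_open[of u v])
  show "u \<le> v" by fact
  fix w assume w: "u < w" "w < v"
  have w0: "0 < w" "0 < 1 - w" "1 - w \<le> w" using w assms by auto
  have D: "DERIV (\<lambda>w. a * w powr b + c * (1-w) powr b) w :>
     a * (b * w powr (b - 1) * 1) + c * (b * (1-w) powr (b-1) * (-1))"
    by (intro derivative_eq_intros DERIV_fun_powr) (use w0 in auto)
  have "(1-w) powr (b-1) \<le> w powr (b-1)" using w0 assms by (intro powr_mono2) auto
  then have "c * (1-w) powr (b-1) \<le> a * w powr (b-1)"
    using assms by (intro mult_mono) auto
  then have "0 \<le> a * (b * w powr (b - 1) * 1) + c * (b * (1-w) powr (b-1) * (-1))"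
    using assms by (simp add: algebra_simps)
  with D show "\<exists>y. DERIV (\<lambda>w. a * w powr b + c * (1-w) powr b) w :> y \<and> 0 \<le> y" by blast
next
  have "\<forall>w\<in>{u..v}. 0 < w \<and> 0 < 1 - w" using assms by auto
  then show "continuous_on {u..v} (\<lambda>w. a * w powr b + c * (1-w) powr b)"
    by (intro continuous_intros) auto
qed

lemma reflect: "(\<integral>x. f x \<partial>lborel) = (\<integral>x. f (-x) \<partial>lborel)" for f :: "real \<Rightarrow> real"
  by (subst lborel_integral_real_affine[where c="-1" and t=0]) auto

lemma reflect_int: "integrable lborel f \<Longrightarrow> integrable lborel (\<lambda>x. f (-x))" for f :: "real \<Rightarrow> real"
  using lborel_integrable_real_affine[where c="-1" and t=0 and f=f] by simp

lemma sg_cont: "continuous_on UNIV sg"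
  unfolding sg_def using sg_den by (intro continuous_intros) (metis less_irrefl)

lemma sg_meas[measurable]: "sg \<in> borel_measurable borel"
  using sg_cont by (rule borel_measurable_continuous_onI)

lemma G_bound: "0 \<le> sg y powr b \<and> sg y powr b \<le> 1" if "0 \<le> b"
  using sg_pos[of y] sg_less1[of y] that by (auto intro: powr_le1)

lemma int_G:
  assumes "integrable lborel f" "0 \<le> b"
  shows "integrable lborel (\<lambda>x. f x * sg (s*x) powr b)"
proof (rule Bochner_Integration.integrable_bound[OF assms(1)])
  have [measurable]: "f \<in> borel_measurable lborel" using assms(1) by auto
  show "(\<lambda>x. f x * sg (s*x) powr b) \<in> borel_measurable lborel" by measurable
  show "AE x in lborel. norm (f x * sg (s*x) powr b) \<le> norm (f x)"
    using G_bound[OF assms(2), of "s*_"]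
    by (auto simp: abs_mult intro!: mult_left_le)
qed

lemma pair_mono:
  assumes nonneg: "\<forall>x. 0 \<le> f x" and sym: "\<forall>x\<ge>0. f (-x) \<le> f x"
    and b: "1 \<le> b" and st: "0 \<le> s" "s \<le> t"
  shows "f x * sg (s*x) powr b + f (-x) * sg (s*(-x)) powr b
       \<le> f x * sg (t*x) powr b + f (-x) * sg (t*(-x)) powr b"
proof -
  have key: "f y * sg (s*y) powr b + f (-y) * sg (s*(-y)) powr b
       \<le> f y * sg (t*y) powr b + f (-y) * sg (t*(-y)) powr b" if y: "0 \<le> y" for y
  proof -
    have "s*y \<le> t*y" using st y by (intro mult_right_mono) auto
    then have uv: "sg (s*y) \<le> sg (t*y)" by (rule sg_mono)
    have "1/2 \<le> sg (s*y)" using st y by (intro sg_half) auto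
    from H_mono[OF _ _ b this uv sg_less1, of "f (-y)" "f y"] sym nonneg y
    show ?thesis by (simp add: sg_neg)
  qed
  show ?thesis
  proof (cases "0 \<le> x")
    case True then show ?thesis using key by blast
  next
    case False then show ?thesis using key[of "-x"] by (simp add: algebra_simps)
  qed
qed

definition E :: "(real \<Rightarrow> real) \<Rightarrow> real \<Rightarrow> real \<Rightarrow> real" where
  "E f b s = dexp f (\<lambda>x. sg (s*x) powr b)"

lemma E_double:
  assumes "integrable lborel f" "0 \<le> b"
  shows "2 * E f b s = (\<integral>x. f x * sg (s*x) powr b + f (-x) * sg (s*(-x)) powr b \<partial>lborel)"
proof -
  have i: "integrable lborel (\<lambda>x. f x * sg (s*x) powr b)" by (rule int_G[OF assms])
  have "(\<integral>x. f x * sg (s*x) powr b + f (-x) * sg (s*(-x)) powr b \<partial>lborel)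
     = (\<integral>x. f x * sg (s*x) powr b \<partial>lborel) + (\<integral>x. f (-x) * sg (s*(-x)) powr b \<partial>lborel)"
    using reflect_int[OF i] i by (intro Bochner_Integration.integral_add) auto
  also have "(\<integral>x. f (-x) * sg (s*(-x)) powr b \<partial>lborel) = (\<integral>x. f x * sg (s*x) powr b \<partial>lborel)"
    using reflect[of "\<lambda>x. f x * sg (s*x) powr b"] by simp
  finally show ?thesis by (simp add: E_def dexp_def)
qed

lemma E_mono:
  assumes int: "integrable lborel f" and nonneg: "\<forall>x. 0 \<le> f x" and sym: "\<forall>x\<ge>0. f (-x) \<le> f x"
    and b: "1 \<le> b" and st: "0 \<le> s" "s \<le> t"
  shows "E f b s \<le> E f b t"
proof -
  have b0: "0 \<le> b" using b by simp
  have i: "\<And>r. integrable lborel (\<lambda>x. f x * sg (r*x) powr b + f (-x) * sg (r*(-x)) powr b)"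
    using int_G[OF int b0] reflect_int[OF int_G[OF int b0]] by auto
  have "2 * E f b s \<le> 2 * E f b t"
    unfolding E_double[OF int b0]
    by (intro integral_mono i pair_mono[OF nonneg sym b st])
  then show ?thesis by simp
qed

lemma E_bounds:
  assumes int: "integrable lborel f" and nonneg: "\<forall>x. 0 \<le> f x" and sym: "\<forall>x\<ge>0. f (-x) \<le> f x"
    and one: "(\<integral>x. f x \<partial>lborel) = 1"
    and b: "1 \<le> b" and s: "0 \<le> s"
  shows "0 < E f b s \<and> E f b s \<le> 1"
proof
  have b0: "0 \<le> b" using b by simp
  have "E f b 0 = (\<integral>x. f x * (1/2) powr b \<partial>lborel)"
    by (simp add: E_def dexp_def sg_def)
  also have "\<dots> = (1/2) powr b" using one by simp
  finally have "0 < E f b 0" by simp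
  also have "E f b 0 \<le> E f b s" using E_mono[OF int nonneg sym b order.refl s] .
  finally show "0 < E f b s" .
  have "E f b s \<le> (\<integral>x. f x \<partial>lborel)"
    unfolding E_def dexp_def
    using G_bound[OF b0] nonneg
    by (intro integral_mono int_G[OF int b0] int) (auto intro: mult_left_le)
  then show "E f b s \<le> 1" using one by simp
qed

lemma Obj_eq:
  "Obj b p1 f1 p0 f0 s = p1 * ln (E f1 b s) + p0 * ln (E (\<lambda>x. f0 (-x)) b s)"
proof -
  have a: "\<And>x. exp (s*x) / (exp (s*x) + exp (-(s*x))) = sg (s*x)" by (simp add: sg_def)
  have c: "\<And>x. exp (-(s*x)) / (exp (s*x) + exp (-(s*x))) = sg (s*(-x))"
    by (simp add: sg_def add.commute)
  have "dexp f0 (\<lambda>x. sg (s*(-x)) powr b) = E (\<lambda>x. f0 (-x)) b s"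
    unfolding dexp_def E_def using reflect[of "\<lambda>x. f0 x * sg (s*(-x)) powr b"] by simp
  then show ?thesis unfolding Obj_def a c by (simp add: E_def)
qed

theorem proposition3:
  fixes f1 f0 :: "real \<Rightarrow> real" and p1 p0 b :: real
  assumes "is_density f1" and "is_density f0"
    and "p1 > 0" and "p0 > 0"
    and "\<forall>x\<ge>0. f1 x \<ge> f1 (-x)"
    and "\<forall>x\<ge>0. f0 x \<le> f0 (-x)"
    and "b \<ge> 1"
  shows "mono_on {0..} (Obj b p1 f1 p0 f0)
    \<and> ((Obj b p1 f1 p0 f0) \<longlongrightarrow> (SUP s\<in>{0..}. Obj b p1 f1 p0 f0 s)) at_top"
proof -
  define g where "g = (\<lambda>x. f0 (-x))"
  define Q where "Q = Obj b p1 f1 p0 f0"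
  have i1: "integrable lborel f1" "\<forall>x. 0 \<le> f1 x" "(\<integral>x. f1 x \<partial>lborel) = 1"
    using assms(1) by (auto simp: is_density_def)
  have i0: "integrable lborel f0" "\<forall>x. 0 \<le> f0 x" "(\<integral>x. f0 x \<partial>lborel) = 1"
    using assms(2) by (auto simp: is_density_def)
  have ig: "integrable lborel g" "\<forall>x. 0 \<le> g x" "(\<integral>x. g x \<partial>lborel) = 1"
    using i0 reflect_int[OF i0(1)] reflect[of f0] by (auto simp: g_def)
  have s1: "\<forall>x\<ge>0. f1 (-x) \<le> f1 x" using assms(5) by auto
  have sg0: "\<forall>x\<ge>0. g (-x) \<le> g x" using assms(6) by (auto simp: g_def)
  have Oe: "\<And>s. Q s = p1 * ln (E f1 b s) + p0 * ln (E g b s)"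
    unfolding Q_def g_def by (rule Obj_eq)
  have B1: "\<And>s. 0 \<le> s \<Longrightarrow> 0 < E f1 b s \<and> E f1 b s \<le> 1"
    using E_bounds[OF i1(1,2) s1 i1(3) assms(7)] by blast
  have B0: "\<And>s. 0 \<le> s \<Longrightarrow> 0 < E g b s \<and> E g b s \<le> 1"
    using E_bounds[OF ig(1,2) sg0 ig(3) assms(7)] by blast
  have mono: "Q s \<le> Q t" if "0 \<le> s" "s \<le> t" for s t
  proof -
    have "E f1 b s \<le> E f1 b t" "E g b s \<le> E g b t"
      using E_mono[OF i1(1,2) s1 assms(7) that] E_mono[OF ig(1,2) sg0 assms(7) that] by auto
    then have "ln (E f1 b s) \<le> ln (E f1 b t)" "ln (E g b s) \<le> ln (E g b t)"
      using B1[OF that(1)] B0[OF that(1)] by auto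
    then show ?thesis unfolding Oe using assms(3,4)
      by (intro add_mono mult_left_mono) auto
  qed
  have le0: "Q s \<le> 0" if "0 \<le> s" for s
  proof -
    have "ln (E f1 b s) \<le> 0" "ln (E g b s) \<le> 0" using B1[OF that] B0[OF that] by auto
    then show ?thesis unfolding Oe using assms(3,4)
      by (simp add: add_nonpos_nonpos mult_nonneg_nonpos)
  qed
  have bdd: "bdd_above (Q ` {0..})" by (rule bdd_aboveI2[where M=0]) (use le0 in auto)
  have lim: "(Q \<longlongrightarrow> (SUP s\<in>{0..}. Q s)) at_top"
  proof (rule order_tendstoI)
    fix a assume "a < (SUP s\<in>{0..}. Q s)"
    then obtain s0 where s0: "0 \<le> s0" "a < Q s0"
      using less_cSUP_iff[OF _ bdd] by auto
    show "\<forall>\<^sub>F x in at_top. a < Q x"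
      unfolding eventually_at_top_linorder
      using s0 mono by (intro exI[of _ s0]) (auto intro: less_le_trans)
  next
    fix a assume a: "(SUP s\<in>{0..}. Q s) < a"
    show "\<forall>\<^sub>F x in at_top. Q x < a"
      unfolding eventually_at_top_linorder
      using a cSUP_upper[OF _ bdd] by (intro exI[of _ 0]) (auto intro: le_less_trans)
  qed
  have "mono_on {0..} Q" using mono by (auto intro: mono_onI)
  with lim show ?thesis unfolding Q_def by simp
qed

end
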